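(* Let $S$ be a finite set of points in the plane whose convex hull is the triangle $ABC$ with $A,B,C\in S$, and suppose $S$ contains at least one point other than $A,B,C$. Let $A_1$ be a point of $S\setminus\{A,B,C\}$ at maximum distance from the line $BC$ among the points of $S\setminus\{A,B,C\}$. Then the segment $AA_1$ is an edge of every triangulation of $S$.
   Context: A triangulation of a finite planar point set $S$ is a maximal set of straight line segments whose endpoints are in $S$, which contain no point of $S$ other than their endpoints, and any two of which meet at most in a common endpoint. *)

theory Defs
  imports "HOL-Analysis.Analysis"
begin

definition seg_of :: "(real^2) set \<Rightarrow> (real^2) set \<Rightarrow> bool" where
  "seg_of S s \<longleftrightarrow> (\<exists>p\<in>S. \<exists>q\<in>S. p \<noteq> q \<and> s = closed_segment p q \<and> s \<inter> S = {p, q})"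

definition seg_family :: "(real^2) set \<Rightarrow> (real^2) set set \<Rightarrow> bool" where
  "seg_family S T \<longleftrightarrow>
     (\<forall>s\<in>T. seg_of S s) \<and>
     (\<forall>s\<in>T. \<forall>t\<in>T. s \<noteq> t \<longrightarrow>
        s \<inter> t = {} \<or> (\<exists>x. s \<inter> t = {x} \<and> x \<in> S))"

definition triangulation :: "(real^2) set \<Rightarrow> (real^2) set set \<Rightarrow> bool" where
  "triangulation S T \<longleftrightarrow> seg_family S T \<and>
     (\<forall>T'. T \<subseteq> T' \<and> seg_family S T' \<longrightarrow> T' = T)"

end

theory Submission
  imports Defs
begin

lemma infdist_ge_aux:
  assumes "A \<noteq> {}" "\<And>a. a \<in> A \<Longrightarrow> c \<le> dist x a"
  shows "c \<le> infdist x A"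
  using assms by (simp add: infdist_notempty cINF_greatest)

lemma hom_le:
  fixes L :: "'a::real_normed_vector set"
  assumes "affine L" "y \<in> L" "t > 0"
  shows "infdist (y + t *\<^sub>R (x - y)) L \<le> t * infdist x L"
proof -
  have "infdist (y + t *\<^sub>R (x - y)) L / t \<le> infdist x L"
  proof (rule infdist_ge_aux)
    show "L \<noteq> {}" using assms by auto
  next
    fix z assume z: "z \<in> L"
    have m: "y + t *\<^sub>R (z - y) \<in> L"
    proof -
      have "(1 - t) *\<^sub>R y + t *\<^sub>R z \<in> L" using mem_affine[OF assms(1) assms(2) z] by simp
      moreover have "(1 - t) *\<^sub>R y + t *\<^sub>R z = y + t *\<^sub>R (z - y)" by (simp add: algebra_simps)
      ultimately show ?thesis by simp
    qed
    have "dist (y + t *\<^sub>R (x - y)) (y + t *\<^sub>R (z - y)) = t * dist x z"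
    proof -
      have "(y + t *\<^sub>R (x - y)) - (y + t *\<^sub>R (z - y)) = t *\<^sub>R (x - z)" by (simp add: algebra_simps)
      then show ?thesis using assms(3) by (simp add: dist_norm)
    qed
    moreover have "infdist (y + t *\<^sub>R (x - y)) L \<le> dist (y + t *\<^sub>R (x - y)) (y + t *\<^sub>R (z - y))"
      by (rule infdist_le[OF m])
    ultimately have "infdist (y + t *\<^sub>R (x - y)) L \<le> t * dist x z"
      by linarith
    then show "infdist (y + t *\<^sub>R (x - y)) L / t \<le> dist x z"
      using assms(3) by (simp add: divide_simps mult.commute)
  qed
  then show ?thesis using assms(3) by (simp add: divide_simps mult.commute)
qed

lemma hom_eq:
  fixes L :: "'a::real_normed_vector set"
  assumes "affine L" "y \<in> L" "t \<ge> 0"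
  shows "infdist (y + t *\<^sub>R (x - y)) L = t * infdist x L"
proof (cases "t = 0")
  case True then show ?thesis using assms by simp
next
  case False
  then have t: "t > 0" using assms by simp
  define x' where "x' = y + t *\<^sub>R (x - y)"
  have "y + (1/t) *\<^sub>R (x' - y) = x" using t by (simp add: x'_def)
  then have "infdist x L \<le> (1/t) * infdist x' L"
    using hom_le[OF assms(1,2), of "1/t" x'] t by simp
  then have "t * infdist x L \<le> infdist x' L" using t by (simp add: divide_simps mult.commute)
  moreover have "infdist x' L \<le> t * infdist x L" using hom_le[OF assms(1,2) t] x'_def by simp
  ultimately show ?thesis unfolding x'_def by simp
qed

lemma core:
  fixes A B C :: "'a::real_normed_vector"
  assumes "0 \<le> u" "0 \<le> v" "0 \<le> w" "u + v + w = 1"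
  shows "infdist (u *\<^sub>R A + v *\<^sub>R B + w *\<^sub>R C) (affine hull {B, C}) = u * infdist A (affine hull {B, C})"
proof (cases "u = 1")
  case True
  then have "v = 0" "w = 0" using assms by auto
  then show ?thesis using True by simp
next
  case False
  then have vw: "v + w > 0" using assms by auto
  define y where "y = (v / (v + w)) *\<^sub>R B + (w / (v + w)) *\<^sub>R C"
  have yL: "y \<in> affine hull {B, C}"
    unfolding y_def
    by (rule mem_affine) (use vw in \<open>auto simp: hull_inc add_divide_distrib[symmetric]\<close>)
  have "u *\<^sub>R A + v *\<^sub>R B + w *\<^sub>R C = y + u *\<^sub>R (A - y)"
  proof -
    have "y + u *\<^sub>R (A - y) = u *\<^sub>R A + (1 - u) *\<^sub>R y" by (simp add: algebra_simps)
    also have "(1 - u) = v + w" using assms by simp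
    also have "(v + w) *\<^sub>R y = v *\<^sub>R B + w *\<^sub>R C" using vw by (simp add: y_def scaleR_add_right)
    finally show ?thesis by (simp add: add.assoc)
  qed
  then show ?thesis using hom_eq[OF affine_affine_hull yL assms(1)] by simp
qed


lemma aff:
  fixes A B C :: "'a::real_normed_vector"
  assumes "p \<in> convex hull {A, B, C}" "q \<in> convex hull {A, B, C}" "0 \<le> t" "t \<le> 1"
  shows "infdist ((1 - t) *\<^sub>R p + t *\<^sub>R q) (affine hull {B, C})
       = (1 - t) * infdist p (affine hull {B, C}) + t * infdist q (affine hull {B, C})"
proof -
  obtain u1 v1 w1 where p: "p = u1 *\<^sub>R A + v1 *\<^sub>R B + w1 *\<^sub>R C" "0 \<le> u1" "0 \<le> v1" "0 \<le> w1" "u1 + v1 + w1 = 1"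
    using assms(1) unfolding convex_hull_3 by blast
  obtain u2 v2 w2 where q: "q = u2 *\<^sub>R A + v2 *\<^sub>R B + w2 *\<^sub>R C" "0 \<le> u2" "0 \<le> v2" "0 \<le> w2" "u2 + v2 + w2 = 1"
    using assms(2) unfolding convex_hull_3 by blast
  have e: "(1 - t) *\<^sub>R p + t *\<^sub>R q = ((1-t)* u1 + t* u2) *\<^sub>R A + ((1-t)* v1 + t* v2) *\<^sub>R B + ((1-t)* w1 + t* w2) *\<^sub>R C"
    unfolding p q by (simp add: algebra_simps)
  have s: "((1-t)* u1 + t* u2) + ((1-t)* v1 + t* v2) + ((1-t)* w1 + t* w2) = 1"
  proof -
    have "((1-t)* u1 + t* u2) + ((1-t)* v1 + t* v2) + ((1-t)* w1 + t* w2)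
        = (1-t) * (u1 + v1 + w1) + t * (u2 + v2 + w2)" by (simp add: algebra_simps)
    then show ?thesis using p(5) q(5) by simp
  qed
  have "infdist ((1 - t) *\<^sub>R p + t *\<^sub>R q) (affine hull {B, C}) = ((1-t)* u1 + t* u2) * infdist A (affine hull {B, C})"
    unfolding e by (rule core) (use p q assms s in auto)
  moreover have "infdist p (affine hull {B, C}) = u1 * infdist A (affine hull {B, C})"
    unfolding p(1) by (rule core) (use p in auto)
  moreover have "infdist q (affine hull {B, C}) = u2 * infdist A (affine hull {B, C})"
    unfolding q(1) by (rule core) (use q in auto)
  ultimately show ?thesis by (simp add: algebra_simps)
qed

theorem lemma4p2:
  fixes S :: "(real^2) set" and A B C A1 :: "real^2"
  assumes "finite S"
    and "A \<in> S" "B \<in> S" "C \<in> S"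
    and "\<not> collinear {A, B, C}"
    and "convex hull S = convex hull {A, B, C}"
    and "S - {A, B, C} \<noteq> {}"
    and "A1 \<in> S - {A, B, C}"
    and "\<forall>P\<in>S - {A, B, C}. infdist P (affine hull {B, C}) \<le> infdist A1 (affine hull {B, C})"
  shows "\<forall>T. triangulation S T \<longrightarrow> closed_segment A A1 \<in> T"
proof (intro allI impI)
  fix T assume tri: "triangulation S T"
  define L where "L = affine hull {B, C}"
  define g where "g x = infdist x L" for x
  define d where "d = g A1"
  have Shull: "S \<subseteq> convex hull {A, B, C}" using hull_subset[of S convex] assms(6) by simp
  have AL: "A \<notin> L"
  proof
    assume "A \<in> L"
    then have "collinear {B, C, A}" unfolding L_def by (rule affine_hull_3_imp_collinear)
    moreover have "{B, C, A} = {A, B, C}" by auto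
    ultimately show False using assms(5) by simp
  qed
  have gA: "g A > 0" unfolding g_def L_def
    using infdist_pos_not_in_closed[of "affine hull {B, C}" A] AL L_def by auto
  have A1A: "A1 \<noteq> A" using assms(8) by auto
  have dA: "d < g A"
  proof -
    obtain u v w where p: "A1 = u *\<^sub>R A + v *\<^sub>R B + w *\<^sub>R C" "0 \<le> u" "0 \<le> v" "0 \<le> w" "u + v + w = 1"
      using Shull assms(8) unfolding convex_hull_3 by blast
    have "d = u * g A" unfolding d_def g_def L_def p(1) by (rule core) (use p in auto)
    moreover have "u \<noteq> 1"
    proof
      assume "u = 1" then have "v = 0" "w = 0" using p by auto
      then show False using \<open>u = 1\<close> p(1) A1A by simp
    qed
    moreover have "u \<le> 1" using p by linarith
    ultimately have "u < 1" by simp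
    then have "u * g A < 1 * g A" using gA by (rule mult_strict_right_mono)
    then show ?thesis using \<open>d = u * g A\<close> by simp
  qed
  have gle: "g x \<le> d" if "x \<in> S" "x \<noteq> A" for x
  proof (cases "x \<in> {B, C}")
    case True
    then have "g x = 0" unfolding g_def L_def by (auto simp: hull_inc)
    then show ?thesis unfolding d_def g_def using infdist_nonneg by (metis)
  next
    case False
    then show ?thesis using assms(9) that(1) that(2) unfolding d_def g_def L_def by auto
  qed
  have Ahull: "A \<in> convex hull {A, B, C}" "A1 \<in> convex hull {A, B, C}"
    using Shull assms(2,8) by auto
  have key: "z = A1" if zz: "z \<in> closed_segment A A1" "g z \<le> d" for z
  proof -
    obtain t where t: "0 \<le> t" "t \<le> 1" "z = (1 - t) *\<^sub>R A + t *\<^sub>R A1"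
      using zz(1) by (auto simp: in_segment)
    have "g z = (1 - t) * g A + t * d" unfolding t(3) g_def d_def L_def
      by (rule aff) (use Ahull t in auto)
    moreover have "(1 - t) * (g A - d) = (1 - t) * g A + t * d - d" by (simp add: algebra_simps)
    ultimately have "(1 - t) * (g A - d) \<le> 0" using zz(2) by linarith
    then have "1 - t \<le> 0" using dA by (auto simp: mult_le_0_iff)
    then have "t = 1" using t by simp
    then show ?thesis using t by simp
  qed
  have segS: "closed_segment A A1 \<inter> S = {A, A1}"
  proof
    show "{A, A1} \<subseteq> closed_segment A A1 \<inter> S" using assms(2,8) by auto
  next
    show "closed_segment A A1 \<inter> S \<subseteq> {A, A1}"
    proof
      fix z assume z: "z \<in> closed_segment A A1 \<inter> S"
      show "z \<in> {A, A1}"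
      proof (cases "z = A")
        case False
        have zs: "z \<in> S" "z \<in> closed_segment A A1" using z by auto
        have "g z \<le> d" by (rule gle) (use zs False in auto)
        then have "z = A1" using key zs(2) by blast
        then show ?thesis by simp
      qed simp
    qed
  qed
  have segAA1: "seg_of S (closed_segment A A1)"
    unfolding seg_of_def using assms(2,8) A1A segS by auto
  have good: "s \<inter> closed_segment A A1 = {} \<or> (\<exists>x. s \<inter> closed_segment A A1 = {x} \<and> x \<in> S)"
    if sT: "s \<in> T" and sne: "s \<noteq> closed_segment A A1" for s
  proof -
    have "seg_of S s" using tri sT unfolding triangulation_def seg_family_def by blast
    then obtain p q where pq: "p \<in> S" "q \<in> S" "p \<noteq> q" "s = closed_segment p q" "s \<inter> S = {p, q}"
      unfolding seg_of_def by blast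
    show ?thesis
    proof (cases "A \<in> {p, q}")
      case False
      have "s \<inter> closed_segment A A1 \<subseteq> {A1}"
      proof
        fix z assume z: "z \<in> s \<inter> closed_segment A A1"
        obtain t where t: "0 \<le> t" "t \<le> 1" "z = (1 - t) *\<^sub>R p + t *\<^sub>R q"
          using z pq(4) by (auto simp: in_segment)
        have "g z = (1 - t) * g p + t * g q" unfolding t(3) g_def L_def
          by (rule aff) (use Shull pq t in auto)
        moreover have "g p \<le> d" "g q \<le> d" using gle pq False by auto
        moreover have "(1 - t) * g p \<le> (1 - t) * d" using \<open>g p \<le> d\<close> t by (intro mult_left_mono) auto
        moreover have "t * g q \<le> t * d" using \<open>g q \<le> d\<close> t by (intro mult_left_mono) auto
        moreover have "(1 - t) * d + t * d = d" by (simp add: algebra_simps)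
        ultimately have "g z \<le> d" by linarith
        then show "z \<in> {A1}" using key z by auto
      qed
      then show ?thesis using assms(8) by (metis Diff_iff subset_singletonD)
    next
      case True
      note AinPQ = True
      have "\<exists>q'. s = closed_segment A q' \<and> q' \<in> S \<and> q' \<noteq> A \<and> s \<inter> S = {A, q'}"
      proof (cases "A = p")
        case True
        then show ?thesis using pq by (intro exI[of _ q]) auto
      next
        case False
        then have Aq: "A = q" using AinPQ by simp
        have "{q, p} = {p, q}" by auto
        moreover have "closed_segment q p = closed_segment p q" by (rule closed_segment_commute)
        ultimately show ?thesis using pq Aq by (intro exI[of _ p]) auto
      qed
      then obtain q' where q': "s = closed_segment A q'" "q' \<in> S" "q' \<noteq> A" "s \<inter> S = {A, q'}"
        by blast
      have q'A1: "q' \<noteq> A1" using q' sne by auto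
      have "s \<inter> closed_segment A A1 = {A}"
      proof
        show "{A} \<subseteq> s \<inter> closed_segment A A1" using q' by auto
      next
        show "s \<inter> closed_segment A A1 \<subseteq> {A}"
        proof
          fix z assume z: "z \<in> s \<inter> closed_segment A A1"
          then have z1: "z \<in> closed_segment A q'" and z2: "z \<in> closed_segment A A1" using q'(1) by auto
          obtain a where a: "0 \<le> a" "a \<le> 1" "z = (1 - a) *\<^sub>R A + a *\<^sub>R q'"
            using z1 by (auto simp: in_segment)
          obtain b where b: "0 \<le> b" "b \<le> 1" "z = (1 - b) *\<^sub>R A + b *\<^sub>R A1"
            using z2 by (auto simp: in_segment)
          have a3: "z = A + a *\<^sub>R (q' - A)" using a(3) by (simp add: algebra_simps)
          have b3: "z = A + b *\<^sub>R (A1 - A)" using b(3) by (simp add: algebra_simps)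
          show "z \<in> {A}"
          proof (rule ccontr)
            assume "z \<notin> {A}"
            then have "z \<noteq> A" by simp
            then have a0: "a > 0" and b0: "b > 0" using a3 b3 a(1) b(1) by (auto simp: less_le)
            have eq: "a *\<^sub>R (q' - A) = b *\<^sub>R (A1 - A)" using a3 b3 by simp
            show False
            proof (cases "a \<le> b")
              case True
              have e1: "A + (a / b) *\<^sub>R (q' - A) = A1"
              proof -
                have "(a / b) *\<^sub>R (q' - A) = (1 / b) *\<^sub>R (a *\<^sub>R (q' - A))" by simp
                also have "\<dots> = A1 - A" using eq b0 by simp
                finally show ?thesis by simp
              qed
              have e2: "A + (a / b) *\<^sub>R (q' - A) = (1 - a / b) *\<^sub>R A + (a / b) *\<^sub>R q'"
                by (simp add: algebra_simps)
              have ab: "0 \<le> a / b" "a / b \<le> 1" using True a0 b0 by auto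
              have "A + (a / b) *\<^sub>R (q' - A) \<in> closed_segment A q'"
                unfolding e2 in_segment(1) using ab by blast
              then have "A1 \<in> s \<inter> S" using q'(1) assms(8) e1 by auto
              then show False using q'(4) q'A1 A1A by auto
            next
              case False
              have e1: "A + (b / a) *\<^sub>R (A1 - A) = q'"
              proof -
                have "(b / a) *\<^sub>R (A1 - A) = (1 / a) *\<^sub>R (b *\<^sub>R (A1 - A))" by simp
                also have "\<dots> = q' - A" using eq[symmetric] a0 by simp
                finally show ?thesis by simp
              qed
              have e2: "A + (b / a) *\<^sub>R (A1 - A) = (1 - b / a) *\<^sub>R A + (b / a) *\<^sub>R A1"
                by (simp add: algebra_simps)
              have ab: "0 \<le> b / a" "b / a \<le> 1" using False a0 b0 by auto
              have "A + (b / a) *\<^sub>R (A1 - A) \<in> closed_segment A A1"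
                unfolding e2 in_segment(1) using ab by blast
              then have "q' \<in> closed_segment A A1 \<inter> S" using q'(2) e1 by auto
              then show False using segS q'(3) q'A1 by auto
            qed
          qed
        qed
      qed
      then show ?thesis using assms(2) by blast
    qed
  qed
  have fam: "seg_family S (insert (closed_segment A A1) T)"
    unfolding seg_family_def
  proof (intro conjI ballI impI)
    fix s assume "s \<in> insert (closed_segment A A1) T"
    then show "seg_of S s" using segAA1 tri unfolding triangulation_def seg_family_def by auto
  next
    fix s t assume s: "s \<in> insert (closed_segment A A1) T" and t: "t \<in> insert (closed_segment A A1) T"
      and st: "s \<noteq> t"
    show "s \<inter> t = {} \<or> (\<exists>x. s \<inter> t = {x} \<and> x \<in> S)"
    proof (cases "s = closed_segment A A1")
      case True
      then have "t \<in> T" "t \<noteq> closed_segment A A1" using t st by auto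
      then show ?thesis using good True by (metis inf_commute)
    next
      case False
      note sF = False
      show ?thesis
      proof (cases "t = closed_segment A A1")
        case True
        then show ?thesis using good s sF by auto
      next
        case False
        then show ?thesis using s t sF st tri unfolding triangulation_def seg_family_def by auto
      qed
    qed
  qed
  then have "insert (closed_segment A A1) T = T" using tri unfolding triangulation_def by blast
  then show "closed_segment A A1 \<in> T" by blast
qed

end
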